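(* The category $\mathsf{HSLat}$ of Heyting semilattices is not action accessible.
   Context: A Heyting semilattice is a meet-semilattice with top $1$ and an operation $\Rightarrow$ with $x\wedge y\le z$ iff $x\le y\Rightarrow z$; morphisms preserve $1,\wedge,\Rightarrow$; $\mathsf{HSLat}$ is semi-abelian. For an object $X$ of a semi-abelian category $\mathcal C$, $\mathsf{SpltExt}_{\mathcal C}(X)$ is the category of split extensions $X\xrightarrow{\kappa}A\rightleftarrows B$ (with $\alpha\colon A\to B$, $\beta\colon B\to A$, $\alpha\beta=1_B$, $\kappa=\ker\alpha$), whose morphisms are morphisms of extensions which are the identity on $X$ and commute with the sections. An object of a category is subterminal if every object admits at most one morphism into it; a category has enough subterminal objects if every object admits a morphism into a subterminal object. $\mathcal C$ is action accessible if for every object $X$, $\mathsf{SpltExt}_{\mathcal C}(X)$ has enough subterminal objects. *)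

theory Defs
  imports Main
begin

record 'a hsl =
  hcar  :: "'a set"
  htop  :: "'a"
  hmeet :: "'a \<Rightarrow> 'a \<Rightarrow> 'a"
  himp  :: "'a \<Rightarrow> 'a \<Rightarrow> 'a"

definition hle :: "'a hsl \<Rightarrow> 'a \<Rightarrow> 'a \<Rightarrow> bool" where
  "hle H x y \<longleftrightarrow> hmeet H x y = x"

definition heyting_semilattice :: "'a hsl \<Rightarrow> bool" where
  "heyting_semilattice H \<longleftrightarrow>
     htop H \<in> hcar H \<and>
     (\<forall>x\<in>hcar H. \<forall>y\<in>hcar H. hmeet H x y \<in> hcar H \<and> himp H x y \<in> hcar H) \<and>
     (\<forall>x\<in>hcar H. hmeet H x x = x) \<and>
     (\<forall>x\<in>hcar H. \<forall>y\<in>hcar H. hmeet H x y = hmeet H y x) \<and>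
     (\<forall>x\<in>hcar H. \<forall>y\<in>hcar H. \<forall>z\<in>hcar H. hmeet H (hmeet H x y) z = hmeet H x (hmeet H y z)) \<and>
     (\<forall>x\<in>hcar H. hle H x (htop H)) \<and>
     (\<forall>x\<in>hcar H. \<forall>y\<in>hcar H. \<forall>z\<in>hcar H.
        hle H (hmeet H x y) z \<longleftrightarrow> hle H x (himp H y z))"

definition hsl_hom :: "'a hsl \<Rightarrow> 'b hsl \<Rightarrow> ('a \<Rightarrow> 'b) \<Rightarrow> bool" where
  "hsl_hom H K f \<longleftrightarrow>
     (\<forall>x\<in>hcar H. f x \<in> hcar K) \<and>
     f (htop H) = htop K \<and>
     (\<forall>x\<in>hcar H. \<forall>y\<in>hcar H. f (hmeet H x y) = hmeet K (f x) (f y)) \<and>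
     (\<forall>x\<in>hcar H. \<forall>y\<in>hcar H. f (himp H x y) = himp K (f x) (f y))"

record ('x, 'a, 'b) splext =
  sA  :: "'a hsl"
  sB  :: "'b hsl"
  kap :: "'x \<Rightarrow> 'a"
  alp :: "'a \<Rightarrow> 'b"
  bet :: "'b \<Rightarrow> 'a"

text \<open>In HSLat, a morphism kap is a kernel of alp iff it is injective and its image is
  the preimage of the top element under alp.\<close>
definition is_splext :: "'x hsl \<Rightarrow> ('x, 'a, 'b) splext \<Rightarrow> bool" where
  "is_splext X E \<longleftrightarrow>
     heyting_semilattice X \<and> heyting_semilattice (sA E) \<and> heyting_semilattice (sB E) \<and>
     hsl_hom X (sA E) (kap E) \<and> hsl_hom (sA E) (sB E) (alp E) \<and> hsl_hom (sB E) (sA E) (bet E) \<and>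
     (\<forall>b\<in>hcar (sB E). alp E (bet E b) = b) \<and>
     inj_on (kap E) (hcar X) \<and>
     kap E ` hcar X = {a \<in> hcar (sA E). alp E a = htop (sB E)}"

definition splext_morph ::
  "'x hsl \<Rightarrow> ('x, 'a, 'b) splext \<Rightarrow> ('x, 'c, 'd) splext \<Rightarrow> ('a \<Rightarrow> 'c) \<Rightarrow> ('b \<Rightarrow> 'd) \<Rightarrow> bool" where
  "splext_morph X E E' f g \<longleftrightarrow>
     hsl_hom (sA E) (sA E') f \<and> hsl_hom (sB E) (sB E') g \<and>
     (\<forall>x\<in>hcar X. f (kap E x) = kap E' x) \<and>
     (\<forall>a\<in>hcar (sA E). alp E' (f a) = g (alp E a)) \<and>
     (\<forall>b\<in>hcar (sB E). f (bet E b) = bet E' (g b))"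

definition splext_morph_eq ::
  "('x, 'a, 'b) splext \<Rightarrow> ('a \<Rightarrow> 'c) \<Rightarrow> ('b \<Rightarrow> 'd) \<Rightarrow> ('a \<Rightarrow> 'c) \<Rightarrow> ('b \<Rightarrow> 'd) \<Rightarrow> bool" where
  "splext_morph_eq E f g f' g' \<longleftrightarrow>
     (\<forall>a\<in>hcar (sA E). f a = f' a) \<and> (\<forall>b\<in>hcar (sB E). g b = g' b)"

text \<open>Subterminality of E' in SpltExt(X), tested against all split extensions of X
  whose carriers live in the types 'e and 'f.\<close>
definition subterminal_splext ::
  "'e itself \<Rightarrow> 'f itself \<Rightarrow> 'x hsl \<Rightarrow> ('x, 'c, 'd) splext \<Rightarrow> bool" where
  "subterminal_splext _ _ X E' \<longleftrightarrow>
     (\<forall>(E :: ('x, 'e, 'f) splext) f g f' g'.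
        is_splext X E \<and> splext_morph X E E' f g \<and> splext_morph X E E' f' g'
        \<longrightarrow> splext_morph_eq E f g f' g')"

end

theory Submission
  imports Defs
begin

definition X0 :: "nat set hsl" where
  "X0 = \<lparr>hcar = {{0,1},{0,1,2}}, htop = {0,1,2}, hmeet = (\<inter>),
         himp = (\<lambda>x y. if x \<subseteq> y then {0,1,2} else y)\<rparr>"

definition A0 :: "nat set hsl" where
  "A0 = \<lparr>hcar = {{},{0},{0,1},{0,1,2}}, htop = {0,1,2}, hmeet = (\<inter>),
         himp = (\<lambda>x y. if x \<subseteq> y then {0,1,2} else y)\<rparr>"

definition B0 :: "nat set hsl" where
  "B0 = \<lparr>hcar = {{},{0},{0,1}}, htop = {0,1}, hmeet = (\<inter>),
         himp = (\<lambda>x y. if x \<subseteq> y then {0,1} else y)\<rparr>"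

definition E0 :: "(nat set, nat set, nat set) splext" where
  "E0 = \<lparr>sA = A0, sB = B0, kap = id, alp = (\<lambda>x. x \<inter> {0,1}),
         bet = (\<lambda>b. if b = {0,1} then {0,1,2} else b)\<rparr>"

lemma X0_hsl: "heyting_semilattice X0"
  unfolding heyting_semilattice_def X0_def hle_def by auto

lemma A0_hsl: "heyting_semilattice A0"
  unfolding heyting_semilattice_def A0_def hle_def by auto

lemma B0_hsl: "heyting_semilattice B0"
  unfolding heyting_semilattice_def B0_def hle_def by auto

lemma E0_splext: "is_splext X0 E0"
  unfolding is_splext_def
  apply (intro conjI)
  apply (rule X0_hsl)
  apply (simp add: E0_def A0_hsl)
  apply (simp add: E0_def B0_hsl)
  apply (simp add: E0_def hsl_hom_def X0_def A0_def; auto)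
  apply (simp add: E0_def hsl_hom_def B0_def A0_def; auto)
  apply (simp add: E0_def hsl_hom_def B0_def A0_def; auto)
  apply (simp add: E0_def B0_def; auto)
  apply (simp add: E0_def)
  apply (simp add: E0_def X0_def A0_def B0_def; auto)
  done

lemma hsl_meet_top:
  assumes "heyting_semilattice H" "x \<in> hcar H"
  shows "hmeet H x (htop H) = x"
  using assms unfolding heyting_semilattice_def hle_def by auto

lemma hsl_imp_top:
  assumes H: "heyting_semilattice H" and y: "y \<in> hcar H"
  shows "himp H (htop H) y = y"
proof -
  have t: "htop H \<in> hcar H" using H unfolding heyting_semilattice_def by auto
  have i: "himp H (htop H) y \<in> hcar H" using H t y unfolding heyting_semilattice_def by auto
  have adj: "\<And>x. x \<in> hcar H \<Longrightarrow> hle H (hmeet H x (htop H)) y = hle H x (himp H (htop H) y)"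
    using H t y unfolding heyting_semilattice_def by blast
  have refl: "\<And>x. x \<in> hcar H \<Longrightarrow> hle H x x"
    using H unfolding heyting_semilattice_def hle_def by auto
  have 1: "hle H (himp H (htop H) y) y"
    using adj[OF i] refl[OF i] hsl_meet_top[OF H i] by simp
  have 2: "hle H y (himp H (htop H) y)"
    using adj[OF y] refl[OF y] hsl_meet_top[OF H y] by simp
  have comm: "hmeet H y (himp H (htop H) y) = hmeet H (himp H (htop H) y) y"
    using H i y unfolding heyting_semilattice_def by auto
  show ?thesis using 1 2 comm unfolding hle_def by simp
qed

definition dsub :: "'a hsl \<Rightarrow> 'a set \<Rightarrow> ('a \<times> 'a) hsl" where
  "dsub H S = \<lparr>hcar = (\<lambda>a. (a,a)) ` S, htop = (htop H, htop H),
     hmeet = (\<lambda>x y. (hmeet H (fst x) (fst y), hmeet H (fst x) (fst y))),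
     himp = (\<lambda>x y. (himp H (fst x) (fst y), himp H (fst x) (fst y)))\<rparr>"

lemma dsub_hsl:
  assumes H: "heyting_semilattice H" and S: "S \<subseteq> hcar H" "htop H \<in> S"
    "\<forall>x\<in>S. \<forall>y\<in>S. hmeet H x y \<in> S \<and> himp H x y \<in> S"
  shows "heyting_semilattice (dsub H S)"
  using assms unfolding heyting_semilattice_def hle_def dsub_def
  by (auto simp: subset_iff)

lemma sub_hsl:
  assumes H: "heyting_semilattice H" and S: "S \<subseteq> hcar H" "htop H \<in> S"
    "\<forall>x\<in>S. \<forall>y\<in>S. hmeet H x y \<in> S \<and> himp H x y \<in> S"
  shows "heyting_semilattice (H\<lparr>hcar := S\<rparr>)"
  using assms unfolding heyting_semilattice_def hle_def
  by (auto simp: subset_iff)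


lemma key2:
  fixes E' :: "(nat set, 'c, 'd) splext" and u :: "nat \<Rightarrow> 'c" and v :: "nat \<Rightarrow> 'd"
  assumes sE: "is_splext X0 E'"
  and um: "\<And>i j. i < 4 \<Longrightarrow> j < 4 \<Longrightarrow> hmeet (sA E') (u i) (u j) = u (min i j)"
  and ui: "\<And>i j. i < 4 \<Longrightarrow> j < 4 \<Longrightarrow> himp (sA E') (u i) (u j) = (if i \<le> j then u 3 else u j)"
  and vm: "\<And>i j. i < 3 \<Longrightarrow> j < 3 \<Longrightarrow> hmeet (sB E') (v i) (v j) = v (min i j)"
  and vi: "\<And>i j. i < 3 \<Longrightarrow> j < 3 \<Longrightarrow> himp (sB E') (v i) (v j) = (if i \<le> j then v 2 else v j)"
  and ucar: "\<And>i. i < 4 \<Longrightarrow> u i \<in> hcar (sA E')"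
  and vcar: "\<And>i. i < 3 \<Longrightarrow> v i \<in> hcar (sB E')"
  and utop: "htop (sA E') = u 3" and vtop: "htop (sB E') = v 2"
  and ua: "\<And>i. i < 4 \<Longrightarrow> alp E' (u i) = v (min i 2)"
  and vb: "\<And>i. i < 3 \<Longrightarrow> bet E' (v i) = u (if i = 2 then 3 else i)"
  and uk: "kap E' ` hcar X0 = {u 2, u 3}"
  and d: "u 0 \<noteq> u 2" "u 0 \<noteq> u 3" "u 2 \<noteq> u 3" "v 0 \<noteq> v 1" "v 0 \<noteq> v 2"
  shows "\<not> subterminal_splext TYPE('c \<times> 'c) TYPE('d) X0 E'"
proof
  assume sub: "subterminal_splext TYPE('c \<times> 'c) TYPE('d) X0 E'"
  have hA: "heyting_semilattice (sA E')" and hB: "heyting_semilattice (sB E')"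
    and hk: "hsl_hom X0 (sA E') (kap E')" and ha: "hsl_hom (sA E') (sB E') (alp E')"
    and hb: "hsl_hom (sB E') (sA E') (bet E')"
    and sec: "\<forall>b\<in>hcar (sB E'). alp E' (bet E' b) = b"
    and inj: "inj_on (kap E') (hcar X0)"
    using sE unfolding is_splext_def by auto
  define S where "S = u ` {0,2,3}"
  define E2 :: "(nat set, 'c \<times> 'c, 'd) splext" where
    "E2 = \<lparr>sA = dsub (sA E') S, sB = (sB E')\<lparr>hcar := {v 0, v 2}\<rparr>,
           kap = (\<lambda>x. (kap E' x, kap E' x)), alp = (\<lambda>x. alp E' (fst x)),
           bet = (\<lambda>b. (bet E' b, bet E' b))\<rparr>"
  define phi where "phi = (\<lambda>x::'c \<times> 'c. if fst x = u 0 then u 1 else fst x)"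
  define psi where "psi = (\<lambda>b. if b = v 0 then v 1 else b)"
  have SA: "S \<subseteq> hcar (sA E')" using ucar unfolding S_def by auto
  have Stop: "htop (sA E') \<in> S" using utop unfolding S_def by auto
  have Scl: "\<forall>x\<in>S. \<forall>y\<in>S. hmeet (sA E') x y \<in> S \<and> himp (sA E') x y \<in> S"
    unfolding S_def by (auto simp: um ui)
  have hA2: "heyting_semilattice (dsub (sA E') S)" using dsub_hsl[OF hA SA Stop Scl] .
  have hB2: "heyting_semilattice ((sB E')\<lparr>hcar := {v 0, v 2}\<rparr>)"
    apply (rule sub_hsl[OF hB])
    using vcar vtop by (simp_all add: vm vi)
  have kS: "\<And>x. x \<in> hcar X0 \<Longrightarrow> kap E' x \<in> S" using uk unfolding S_def by auto
  have kS2: "\<And>x. x \<in> hcar X0 \<Longrightarrow> kap E' x \<noteq> u 0"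
  proof -
    fix x assume "x \<in> hcar X0"
    hence "kap E' x \<in> {u 2, u 3}" using uk by blast
    thus "kap E' x \<noteq> u 0" using d by auto
  qed
  have splE2: "is_splext X0 E2"
    unfolding is_splext_def
  proof (intro conjI)
    show "heyting_semilattice X0" by (rule X0_hsl)
    show "heyting_semilattice (sA E2)" using hA2 by (simp add: E2_def)
    show "heyting_semilattice (sB E2)" using hB2 by (simp add: E2_def)
    show "hsl_hom X0 (sA E2) (kap E2)"
      using hk kS unfolding hsl_hom_def E2_def dsub_def by auto
    show "hsl_hom (sA E2) (sB E2) (alp E2)"
      unfolding hsl_hom_def E2_def dsub_def
      by (auto simp: S_def um ui ua utop vtop vm vi)
    show "hsl_hom (sB E2) (sA E2) (bet E2)"
      unfolding hsl_hom_def E2_def dsub_def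
      by (auto simp: S_def vm vi vb utop vtop um ui)
    show "\<forall>b\<in>hcar (sB E2). alp E2 (bet E2 b) = b"
      unfolding E2_def using sec vcar by auto
    show "inj_on (kap E2) (hcar X0)"
      using inj unfolding E2_def inj_on_def by auto
    show "kap E2 ` hcar X0 = {a \<in> hcar (sA E2). alp E2 a = htop (sB E2)}"
    proof -
      have "kap E2 ` hcar X0 = (\<lambda>a. (a,a)) ` (kap E' ` hcar X0)"
        unfolding E2_def by auto
      also have "\<dots> = {(u 2, u 2), (u 3, u 3)}" using uk by simp
      also have "\<dots> = {a \<in> hcar (sA E2). alp E2 a = htop (sB E2)}"
        unfolding E2_def dsub_def S_def using d by (auto simp: ua vtop)
      finally show ?thesis .
    qed
  qed
  have m1: "splext_morph X0 E2 E' fst id"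
    unfolding splext_morph_def hsl_hom_def E2_def dsub_def using SA vcar
    by auto
  have m2: "splext_morph X0 E2 E' phi psi"
    unfolding splext_morph_def hsl_hom_def E2_def dsub_def phi_def psi_def using uk d kS2
    by (auto simp: S_def um ui ua vb utop vtop ucar vcar vm vi)
  have ne: "\<not> splext_morph_eq E2 fst id phi psi"
    unfolding splext_morph_eq_def E2_def psi_def using d by auto
  show False using sub splE2 m1 m2 ne unfolding subterminal_splext_def by blast
qed

lemma key:
  fixes E' :: "(nat set, 'c, 'd) splext"
  assumes sE: "is_splext X0 E'" and mE: "splext_morph X0 E0 E' f g"
  shows "\<not> subterminal_splext TYPE('c \<times> 'c) TYPE('d) X0 E'"
proof
  assume sub: "subterminal_splext TYPE('c \<times> 'c) TYPE('d) X0 E'"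
  let ?T = "{{},{0},{0,1},{0,1,2}} :: nat set set"
  let ?U = "{{},{0},{0,1}} :: nat set set"
  have hA: "heyting_semilattice (sA E')" and hB: "heyting_semilattice (sB E')"
    and hk: "hsl_hom X0 (sA E') (kap E')" and ha: "hsl_hom (sA E') (sB E') (alp E')"
    and hb: "hsl_hom (sB E') (sA E') (bet E')"
    and sec: "\<forall>b\<in>hcar (sB E'). alp E' (bet E' b) = b"
    and inj: "inj_on (kap E') (hcar X0)"
    using sE unfolding is_splext_def by auto
  have hf: "hsl_hom A0 (sA E') f" and hg: "hsl_hom B0 (sB E') g"
    and mk: "\<forall>x\<in>hcar X0. f x = kap E' x"
    and ma: "\<forall>a\<in>hcar A0. alp E' (f a) = g (a \<inter> {0,1})"
    and mb: "\<forall>b\<in>hcar B0. f (if b = {0,1} then {0,1,2} else b) = bet E' (g b)"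
    using mE unfolding splext_morph_def E0_def by auto
  have fk1: "kap E' {0,1} = f {0,1}" and fk2: "kap E' {0,1,2} = f {0,1,2}"
    using mk unfolding X0_def by auto
  have fa: "\<And>x. x \<in> ?T \<Longrightarrow> alp E' (f x) = g (x \<inter> {0,1})"
    using ma unfolding A0_def by auto
  have fb0: "bet E' (g {}) = f {}" and fb1: "bet E' (g {0}) = f {0}"
    and fb2: "bet E' (g {0,1}) = f {0,1,2}"
    using mb unfolding B0_def by auto
  have ftop: "htop (sA E') = f {0,1,2}" using hf unfolding hsl_hom_def A0_def by auto
  have gtop: "htop (sB E') = g {0,1}" using hg unfolding hsl_hom_def B0_def by auto
  have fcar: "\<And>x. x \<in> ?T \<Longrightarrow> f x \<in> hcar (sA E')"
    using hf unfolding hsl_hom_def A0_def by auto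
  have gcar: "\<And>x. x \<in> ?U \<Longrightarrow> g x \<in> hcar (sB E')"
    using hg unfolding hsl_hom_def B0_def by auto
  have fmeet: "\<And>x y. x \<in> ?T \<Longrightarrow> y \<in> ?T \<Longrightarrow> hmeet (sA E') (f x) (f y) = f (x \<inter> y)"
    using hf unfolding hsl_hom_def A0_def by auto
  have fimp: "\<And>x y. x \<in> ?T \<Longrightarrow> y \<in> ?T \<Longrightarrow>
      himp (sA E') (f x) (f y) = f (if x \<subseteq> y then {0,1,2} else y)"
  proof -
    fix x y assume "x \<in> ?T" "y \<in> ?T"
    hence "x \<in> hcar A0" "y \<in> hcar A0" unfolding A0_def by simp_all
    hence "f (himp A0 x y) = himp (sA E') (f x) (f y)" using hf unfolding hsl_hom_def by blast
    thus "himp (sA E') (f x) (f y) = f (if x \<subseteq> y then {0,1,2} else y)"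
      unfolding A0_def by simp
  qed
  have gmeet: "\<And>x y. x \<in> ?U \<Longrightarrow> y \<in> ?U \<Longrightarrow> hmeet (sB E') (g x) (g y) = g (x \<inter> y)"
    using hg unfolding hsl_hom_def B0_def by auto
  have gimp: "\<And>x y. x \<in> ?U \<Longrightarrow> y \<in> ?U \<Longrightarrow>
      himp (sB E') (g x) (g y) = g (if x \<subseteq> y then {0,1} else y)"
  proof -
    fix x y assume "x \<in> ?U" "y \<in> ?U"
    hence "x \<in> hcar B0" "y \<in> hcar B0" unfolding B0_def by simp_all
    hence "g (himp B0 x y) = himp (sB E') (g x) (g y)" using hg unfolding hsl_hom_def by blast
    thus "himp (sB E') (g x) (g y) = g (if x \<subseteq> y then {0,1} else y)"
      unfolding B0_def by simp
  qed
  have kinj: "f {0,1} \<noteq> f {0,1,2}"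
  proof
    assume "f {0,1} = f {0,1,2}"
    hence "kap E' {0,1} = kap E' {0,1,2}" using fk1 fk2 by simp
    moreover have "{0,1} \<in> hcar X0" "{0,1,2} \<in> hcar X0" unfolding X0_def by simp_all
    ultimately have "({0,1}::nat set) = {0,1,2}" using inj inj_onD by metis
    moreover have "(2::nat) \<notin> {0,1}" by simp
    ultimately show False by blast
  qed
  have pt: "g {} \<noteq> g {0,1}"
  proof
    assume e: "g {} = g {0,1}"
    have i1: "himp (sA E') (f {}) (f {0,1}) = f {0,1,2}" using fimp[of "{}" "{0,1}"] by simp
    have i2: "himp (sA E') (f {0,1,2}) (f {0,1}) = f {0,1}" using fimp[of "{0,1,2}" "{0,1}"] by simp
    have "f {} = f {0,1,2}" using fb0 fb2 e by metis
    hence "f {0,1,2} = f {0,1}" using i1 i2 by metis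
    thus False using kinj by metis
  qed
  have pq: "g {} \<noteq> g {0}"
  proof
    assume e: "g {} = g {0}"
    have i1: "himp (sB E') (g {0}) (g {}) = g {}" using gimp[of "{0}" "{}"] by simp
    have i2: "himp (sB E') (g {}) (g {}) = g {0,1}" using gimp[of "{}" "{}"] by simp
    show False using e pt i1 i2 by metis
  qed
  have a0: "alp E' (f {}) = g {}" using fa[of "{}"] by simp
  have a2: "alp E' (f {0,1}) = g {0,1}" using fa[of "{0,1}"] by simp
  have a3: "alp E' (f {0,1,2}) = g {0,1}" using fa[of "{0,1,2}"] by simp
  have a1: "alp E' (f {0}) = g {0}" using fa[of "{0}"] by simp
  have d1: "f {} \<noteq> f {0,1}" using a0 a2 pt by metis
  have d2: "f {} \<noteq> f {0,1,2}" using a0 a3 pt by metis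
  define u where "u = (\<lambda>i::nat. f {..<i})"
  define v where "v = (\<lambda>i::nat. g {..<i})"
  have c: "{..<0::nat} = {}" "{..<1::nat} = {0}" "{..<2::nat} = {0,1}" "{..<3::nat} = {0,1,2}"
    by auto
  have iT: "\<And>i. i < 4 \<Longrightarrow> {..<i} \<in> ?T"
  proof -
    fix i :: nat assume "i < 4"
    hence "i = 0 \<or> i = 1 \<or> i = 2 \<or> i = 3" by arith
    thus "{..<i} \<in> ?T" by (elim disjE; simp only: c insert_iff; simp)
  qed
  have iU: "\<And>i. i < 3 \<Longrightarrow> {..<i} \<in> ?U"
  proof -
    fix i :: nat assume "i < 3"
    hence "i = 0 \<or> i = 1 \<or> i = 2" by arith
    thus "{..<i} \<in> ?U" by (elim disjE; simp only: c insert_iff; simp)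
  qed
  have int: "\<And>i j::nat. {..<i} \<inter> {..<j} = {..<min i j}" by auto
  have sbs: "\<And>i j::nat. ({..<i} \<subseteq> {..<j}) = (i \<le> j)" by auto
  have u3: "u 3 = f {0,1,2}" unfolding u_def by (simp only: c)
  have v2: "v 2 = g {0,1}" unfolding v_def by (simp only: c)
  have h1: "\<And>i j. i < 4 \<Longrightarrow> j < 4 \<Longrightarrow> hmeet (sA E') (u i) (u j) = u (min i j)"
  proof -
    fix i j :: nat assume "i < 4" "j < 4"
    hence "hmeet (sA E') (f {..<i}) (f {..<j}) = f ({..<i} \<inter> {..<j})" using fmeet iT by blast
    thus "hmeet (sA E') (u i) (u j) = u (min i j)" unfolding u_def by (simp only: int)
  qed
  have h2: "\<And>i j. i < 4 \<Longrightarrow> j < 4 \<Longrightarrow> himp (sA E') (u i) (u j) = (if i \<le> j then u 3 else u j)"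
  proof -
    fix i j :: nat assume "i < 4" "j < 4"
    hence "himp (sA E') (f {..<i}) (f {..<j}) = f (if {..<i} \<subseteq> {..<j} then {0,1,2} else {..<j})"
      using fimp iT by blast
    thus "himp (sA E') (u i) (u j) = (if i \<le> j then u 3 else u j)" unfolding u3 unfolding u_def
      by (simp only: sbs if_distrib[of f])
  qed
  have h3: "\<And>i j. i < 3 \<Longrightarrow> j < 3 \<Longrightarrow> hmeet (sB E') (v i) (v j) = v (min i j)"
  proof -
    fix i j :: nat assume "i < 3" "j < 3"
    hence "hmeet (sB E') (g {..<i}) (g {..<j}) = g ({..<i} \<inter> {..<j})" using gmeet iU by blast
    thus "hmeet (sB E') (v i) (v j) = v (min i j)" unfolding v_def by (simp only: int)
  qed
  have h4: "\<And>i j. i < 3 \<Longrightarrow> j < 3 \<Longrightarrow> himp (sB E') (v i) (v j) = (if i \<le> j then v 2 else v j)"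
  proof -
    fix i j :: nat assume "i < 3" "j < 3"
    hence "himp (sB E') (g {..<i}) (g {..<j}) = g (if {..<i} \<subseteq> {..<j} then {0,1} else {..<j})"
      using gimp iU by blast
    thus "himp (sB E') (v i) (v j) = (if i \<le> j then v 2 else v j)" unfolding v2 unfolding v_def
      by (simp only: sbs if_distrib[of g])
  qed
  have h5: "\<And>i. i < 4 \<Longrightarrow> u i \<in> hcar (sA E')" unfolding u_def using fcar iT by blast
  have h6: "\<And>i. i < 3 \<Longrightarrow> v i \<in> hcar (sB E')" unfolding v_def using gcar iU by blast
  have h7: "htop (sA E') = u 3" using u3 ftop by simp
  have h8: "htop (sB E') = v 2" using v2 gtop by simp
  have h9: "\<And>i. i < 4 \<Longrightarrow> alp E' (u i) = v (min i 2)"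
  proof -
    fix i :: nat assume "i < 4"
    hence "alp E' (f {..<i}) = g ({..<i} \<inter> {0,1})" using fa iT by blast
    thus "alp E' (u i) = v (min i 2)" unfolding u_def v_def by (simp only: c(3)[symmetric] int)
  qed
  have h10: "\<And>i. i < 3 \<Longrightarrow> bet E' (v i) = u (if i = 2 then 3 else i)"
  proof -
    fix i :: nat assume "i < 3"
    hence "i = 0 \<or> i = 1 \<or> i = 2" by arith
    moreover have "bet E' (v 0) = u 0" "bet E' (v 1) = u 1" "bet E' (v 2) = u 3"
      unfolding u_def v_def by (simp only: c fb0 fb1 fb2)+
    ultimately show "bet E' (v i) = u (if i = 2 then 3 else i)" by (elim disjE; simp)
  qed
  have h11: "kap E' ` hcar X0 = {u 2, u 3}"
  proof -
    have "hcar X0 = {{0,1},{0,1,2}}" by (simp add: X0_def)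
    thus ?thesis unfolding u_def by (simp only: c fk1 fk2 image_insert image_empty)
  qed
  have h12: "u 0 \<noteq> u 2" "u 0 \<noteq> u 3" "u 2 \<noteq> u 3" "v 0 \<noteq> v 1" "v 0 \<noteq> v 2"
    unfolding u_def v_def by (simp only: c d1 d2 kinj pt pq not_False_eq_True)+
  show False using key2[OF sE h1 h2 h3 h4 h5 h6 h7 h8 h9 h10 h11 h12] sub by blast
qed

theorem mainTheorem6:
  shows "\<exists>(X :: nat set hsl) (E :: (nat set, nat set, nat set) splext).
           is_splext X E \<and>
           (\<forall>(E' :: (nat set, 'c, 'd) splext) f g.
              is_splext X E' \<and> splext_morph X E E' f g
              \<longrightarrow> \<not> subterminal_splext TYPE('c \<times> 'c) TYPE('d) X E')"
  using E0_splext key by blast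

end
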